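(* Let $b>0$, $m\ge 0$ with $b^2>4m$, $\alpha>0$, $\lambda\in\mathbb{R}\setminus\{0\}$, $k\in\mathbb{N}_0^n$, and $\mu_k=2|k|+n$. Let $a_0,a_1\in\mathbb{C}$ and let $w(t)$ solve $$w''(t)+bw'(t)+(|\lambda|^\alpha\mu_k^\alpha+m)w(t)=0\ (t>0),\qquad w(0)=a_0,\ w'(0)=a_1.$$ Then, with implicit constants independent of $t,\lambda,k,a_0,a_1$: 1. If $|\lambda|<\frac1{\mu_k}\left[\frac12\left(\frac{b^2}{4}-m\right)\right]^{1/\alpha}$, then $|w(t)|^2\lesssim e^{(-b+\sqrt{b^2-4m-4|\lambda|^\alpha\mu_k^\alpha})t}(|a_0|^2+|a_1|^2)$; and if $|\lambda|>\frac1{\mu_k}\left[\frac12\left(\frac{b^2}{4}-m\right)\right]^{1/\alpha}$, then $|w(t)|^2\lesssim e^{(-b+\sqrt{\frac12(b^2-4m)})t}(|a_0|^2+|a_1|^2)$. 2. If $|\lambda|<\frac1{\mu_k}\left[\frac12\left(\frac{b^2}{4}-m\right)\right]^{1/\alpha}$, then $$|w'(t)|^2\lesssim e^{(-b+\sqrt{b^2-4m-4|\lambda|^\alpha\mu_k^\alpha})t}(|\lambda|^\alpha\mu_k^\alpha+m)^2(|a_0|^2+|a_1|^2)+e^{(-b-\sqrt{b^2-4m-4|\lambda|^\alpha\mu_k^\alpha})t}|a_1|^2;$$ and if $|\lambda|>\frac1{\mu_k}\left[\frac12\left(\frac{b^2}{4}-m\right)\right]^{1/\alpha}$, then $|w'(t)|^2\lesssim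 e^{(-b+\sqrt{\frac12(b^2-4m)})t}\left((|\lambda|^\alpha\mu_k^\alpha+m)|a_0|^2+|a_1|^2\right)$. 3. If $|\lambda|<\frac1{\mu_k}\left[\frac12\left(\frac{b^2}{4}-m\right)\right]^{1/\alpha}$, then $|(|\lambda|\mu_k)^{\alpha/2}w(t)|^2\lesssim e^{(-b+\sqrt{b^2-4m-4|\lambda|^\alpha\mu_k^\alpha})t}(|\lambda|\mu_k)^\alpha(|a_0|^2+|a_1|^2)$; and if $|\lambda|>\frac1{\mu_k}\left[\frac12\left(\frac{b^2}{4}-m\right)\right]^{1/\alpha}$, then $|(|\lambda|\mu_k)^{\alpha/2}w(t)|^2\lesssim e^{(-b+\sqrt{\frac12(b^2-4m)})t}\left(|\lambda|^\alpha\mu_k^\alpha|a_0|^2+|a_1|^2\right)$.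
   Context: In the paper, $w(t)=\widehat{u}(t,\lambda)_{k,\ell}=(\widehat u(t,\lambda)e_k,e_\ell)_{L^2(\mathbb{R}^n)}$ are the Hermite matrix coefficients of the group Fourier transform of a solution of the linear fractional damped wave equation on $\mathbb{H}^n$, with $a_0=\widehat{u}_0(\lambda)_{k,\ell}$, $a_1=\widehat{u}_1(\lambda)_{k,\ell}$; $\mu_k=2|k|+n$ are the eigenvalues of the Hermite operator on $\mathbb{R}^n$. The lemma is a statement about the scalar ODE above. *)

theory Defs
  imports "HOL-Analysis.Analysis"
begin

definition hermite_mu :: "nat \<Rightarrow> nat list \<Rightarrow> real" where
  "hermite_mu n k = 2 * real (sum_list k) + real n"

definition damped_ode_sol ::
  "real \<Rightarrow> real \<Rightarrow> complex \<Rightarrow> complex \<Rightarrow> (real \<Rightarrow> complex) \<Rightarrow> (real \<Rightarrow> complex) \<Rightarrow> bool" where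
  "damped_ode_sol b q a0 a1 w w1 \<longleftrightarrow>
     w 0 = a0 \<and> w1 0 = a1 \<and>
     (\<forall>t\<ge>0. (w has_vector_derivative w1 t) (at t within {0..})) \<and>
     (\<forall>t>0. \<exists>w2. (w1 has_vector_derivative w2) (at t) \<and>
        w2 + complex_of_real b * w1 t + complex_of_real q * w t = 0)"

end

theory Submission
  imports Defs
begin


definition Gf :: "complex \<Rightarrow> real \<Rightarrow> complex" where
  "Gf d t = (if d = 0 then complex_of_real t else (exp (d * of_real t) - 1) / d)"

lemma exp_vd: "((\<lambda>t. exp (r * complex_of_real t)) has_vector_derivative r * exp (r * of_real t)) (at t within S)"
proof -
  have "((\<lambda>z. exp (r * z)) has_field_derivative r * exp (r * of_real t)) (at (of_real t))"
    by (auto intro!: derivative_eq_intros)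
  from has_vector_derivative_real_field[OF this] show ?thesis by simp
qed

lemma Gf_vd: "((Gf d) has_vector_derivative exp (d * of_real t)) (at t within S)"
proof (cases "d = 0")
  case True
  have "((\<lambda>z. z) has_field_derivative 1) (at (complex_of_real t))"
    by (auto intro!: derivative_eq_intros)
  from has_vector_derivative_real_field[OF this] show ?thesis using True
    by (simp add: Gf_def[abs_def])
next
  case False
  have "((\<lambda>z. (exp (d * z) - 1) / d) has_field_derivative exp (d * of_real t)) (at (of_real t))"
    using False by (auto intro!: derivative_eq_intros)
  from has_vector_derivative_real_field[OF this] show ?thesis using False
    by (simp add: Gf_def[abs_def])
qed

lemma Gf_0[simp]: "Gf d 0 = 0" by (simp add: Gf_def)

lemma const_pos:
  fixes g :: "real \<Rightarrow> complex"
  assumes "\<And>t. t > 0 \<Longrightarrow> (g has_vector_derivative 0) (at t)" "t > 0"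
  shows "g t = g 1"
  apply (rule has_derivative_zero_unique_connected[of "{0<..}" g])
  using assms by (auto simp: has_vector_derivative_def)

lemma ext0:
  fixes w w1 F F' :: "real \<Rightarrow> complex"
  assumes d: "\<forall>t\<ge>0. (w has_vector_derivative w1 t) (at t within {0..})"
    and eq: "\<And>t. t > 0 \<Longrightarrow> w t = F t"
    and dF: "\<And>t. (F has_vector_derivative F' t) (at t)"
    and t: "t \<ge> 0"
  shows "w t = F t \<and> w1 t = F' t"
proof -
  have nb: "at x within {0::real..} \<noteq> bot" if "x \<ge> 0" for x
  proof (cases "x = 0")
    case True then show ?thesis by (simp add: at_within_Ici_at_right)
  next
    case False then have "x > 0" using that by simp
    then have "at x within {0..} = at x"
      by (intro at_within_open_subset[of x "{0<..}"]) auto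
    then show ?thesis by simp
  qed
  have "continuous (at 0 within {0..}) w"
    using d has_vector_derivative_continuous[of w "w1 0" 0 "{0..}"] by simp
  then have tw: "(w \<longlongrightarrow> w 0) (at 0 within {0..})" by (simp only: continuous_within)
  have "continuous (at 0) F" by (rule has_vector_derivative_continuous[OF dF])
  then have "continuous (at 0 within {0..}) F" by (rule continuous_at_imp_continuous_at_within)
  then have tF: "(F \<longlongrightarrow> F 0) (at 0 within {0..})" by (simp only: continuous_within)
  have ev: "eventually (\<lambda>x. w x = F x) (at 0 within {0..})"
    unfolding eventually_at_filter by (rule always_eventually) (auto simp: eq)
  have "(F \<longlongrightarrow> w 0) (at 0 within {0..})" using tendsto_cong[OF ev] tw by blast
  then have w0: "w 0 = F 0" using tendsto_unique[OF nb[of 0] _ tF] by simp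
  have weq: "w x = F x" if "x \<in> {0..}" for x
  proof (cases "x = 0")
    case True then show ?thesis using w0 by simp
  next
    case False then show ?thesis using that eq by simp
  qed
  have "(F has_vector_derivative F' t) (at t within {0..})" 
    using dF by (rule has_vector_derivative_at_within)
  then have "(w has_vector_derivative F' t) (at t within {0..})"
    by (rule has_vector_derivative_transform[rotated 2]) (use t weq in auto)
  then have "w1 t = F' t" using vector_derivative_unique_within[OF nb[OF t]] t d by blast
  then show ?thesis using weq t by auto
qed

lemma expinv: "exp (- a * z) * exp (a * z) = (1::complex)"
  by (metis exp_minus_inverse minus_mult_left mult.commute)

lemma expsum: "exp (a * z) * exp (c * z) = exp ((a + c) * (z::complex))"
  by (simp add: exp_add distrib_right)

lemma ode_repr:
  fixes r1 r2 :: complex and b q :: real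
  assumes vieta: "r1 + r2 = - of_real b" "r1 * r2 = of_real q"
    and sol: "damped_ode_sol b q a0 a1 w w1" and t: "t \<ge> 0"
  shows "w t = exp (r1 * of_real t) * (a0 + (a1 - r1*a0) * Gf (r2 - r1) t) \<and>
         w1 t = r1 * w t + (a1 - r1*a0) * exp (r2 * of_real t)"
proof -
  have w0: "w 0 = a0" and w10: "w1 0 = a1"
    and d: "\<forall>t\<ge>0. (w has_vector_derivative w1 t) (at t within {0..})"
    and ode: "\<forall>t>0. \<exists>w2. (w1 has_vector_derivative w2) (at t) \<and>
        w2 + complex_of_real b * w1 t + complex_of_real q * w t = 0"
    using sol unfolding damped_ode_sol_def by auto
  have dat: "(w has_vector_derivative w1 x) (at x)" if xpos: "x > 0" for x
  proof -
    have "at x within {0..} = at x"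
      using xpos by (intro at_within_open_subset[of x "{0<..}"]) auto
    moreover have "(w has_vector_derivative w1 x) (at x within {0..})" using d that by simp
    ultimately show ?thesis by simp
  qed
  define v where "v x = w1 x - r1 * w x" for x
  have dv: "(v has_vector_derivative r2 * v x) (at x)" if xpos: "x > 0" for x
  proof -
    obtain w2 where w2: "(w1 has_vector_derivative w2) (at x)"
      "w2 + complex_of_real b * w1 x + complex_of_real q * w x = 0" using ode xpos by blast
    have "(v has_vector_derivative w2 - r1 * w1 x) (at x)"
      unfolding v_def[abs_def] by (intro has_vector_derivative_diff w2(1) has_vector_derivative_mult_right dat that)
    moreover have "w2 - r1 * w1 x = r2 * v x"
    proof -
      have bb: "complex_of_real b = - (r1 + r2)" using vieta(1) by simp
      have "w2 + (complex_of_real b * w1 x + complex_of_real q * w x) = 0" using w2(2)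
        by (simp only: add.assoc)
      then have "w2 = - (complex_of_real b * w1 x + complex_of_real q * w x)"
        by (rule add_eq_0_iff2[THEN iffD1])
      then have "w2 = (r1 + r2) * w1 x - r1 * r2 * w x" unfolding bb vieta(2)[symmetric]
        by (simp add: algebra_simps)
      then show ?thesis unfolding v_def by (simp add: algebra_simps)
    qed
    ultimately show ?thesis by simp
  qed
  define h where "h x = v x * exp (- r2 * of_real x)" for x
  have dh: "(h has_vector_derivative 0) (at x)" if xpos: "x > 0" for x
  proof -
    have "(h has_vector_derivative v x * (- r2 * exp (- r2 * of_real x)) + r2 * v x * exp (- r2 * of_real x)) (at x)"
      unfolding h_def[abs_def] by (intro has_vector_derivative_mult dv that exp_vd)
    then show ?thesis by (simp add: algebra_simps)
  qed
  define k where "k = h 1"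
  have vk: "v x = k * exp (r2 * of_real x)" if xpos: "x > 0" for x
  proof -
    have "h x = k" using const_pos[OF dh that] k_def by simp
    then have "v x * exp (- r2 * of_real x) * exp (r2 * of_real x) = k * exp (r2 * of_real x)"
      unfolding h_def by simp
    moreover have "v x * exp (- r2 * of_real x) * exp (r2 * of_real x) = v x"
      using expinv[of r2 "of_real x"] by (simp only: mult.assoc mult_1_right)
    ultimately show ?thesis by simp
  qed
  have eexp: "exp (r1 * of_real x) * exp ((r2 - r1) * of_real x) = exp (r2 * of_real x)" for x
    using expsum[of r1 "of_real x" "r2 - r1"] by simp
  define g where "g x = w x * exp (- r1 * of_real x) - k * Gf (r2 - r1) x" for x
  have dg: "(g has_vector_derivative 0) (at x)" if xpos: "x > 0" for x
  proof -
    have "(g has_vector_derivative w x * (- r1 * exp (- r1 * of_real x)) + w1 x * exp (- r1 * of_real x)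
            - k * exp ((r2 - r1) * of_real x)) (at x)"
      unfolding g_def[abs_def]
      by (intro has_vector_derivative_diff has_vector_derivative_mult has_vector_derivative_mult_right
          dat that exp_vd Gf_vd)
    moreover have "w x * (- r1 * exp (- r1 * of_real x)) + w1 x * exp (- r1 * of_real x)
            - k * exp ((r2 - r1) * of_real x) = 0"
    proof -
      have "w x * (- r1 * exp (- r1 * of_real x)) + w1 x * exp (- r1 * of_real x) = v x * exp (- r1 * of_real x)"
        unfolding v_def by (simp add: algebra_simps)
      also have "\<dots> = k * (exp (r2 * of_real x) * exp (- r1 * of_real x))" using vk[OF that]
        by (simp only: mult.assoc)
      also have "\<dots> = k * exp ((r2 - r1) * of_real x)" using expsum[of r2 "of_real x" "- r1"] by simp
      finally show ?thesis by simp
    qed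
    ultimately show ?thesis by simp
  qed
  define dd where "dd = g 1"
  define F where "F x = exp (r1 * of_real x) * (dd + k * Gf (r2 - r1) x)" for x
  define F' where "F' x = r1 * F x + k * exp (r2 * of_real x)" for x
  have wF: "w x = F x" if xpos: "x > 0" for x
  proof -
    have "g x = dd" using const_pos[OF dg that] dd_def by simp
    then have "w x * exp (- r1 * of_real x) = dd + k * Gf (r2 - r1) x" unfolding g_def by (simp add: algebra_simps)
    then have e1: "w x * exp (- r1 * of_real x) * exp (r1 * of_real x) = (dd + k * Gf (r2 - r1) x) * exp (r1 * of_real x)"
      by simp
    have e2: "w x * exp (- r1 * of_real x) * exp (r1 * of_real x) = w x"
      using expinv[of r1 "of_real x"] by (simp only: mult.assoc mult_1_right)
    from e2[symmetric] e1 have "w x = (dd + k * Gf (r2 - r1) x) * exp (r1 * of_real x)" by (rule trans)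
    then show ?thesis unfolding F_def by (simp only: mult.commute)
  qed
  have dF: "(F has_vector_derivative F' x) (at x)" for x
  proof -
    have "(F has_vector_derivative exp (r1 * of_real x) * (k * exp ((r2 - r1) * of_real x)) + r1 * exp (r1 * of_real x) * (dd + k * Gf (r2 - r1) x)) (at x)"
    proof -
      have "((\<lambda>x. dd + k * Gf (r2 - r1) x) has_vector_derivative k * exp ((r2 - r1) * complex_of_real x)) (at x)"
        using has_vector_derivative_add[OF has_vector_derivative_const has_vector_derivative_mult_right[OF Gf_vd]]
        by simp
      from has_vector_derivative_mult[OF exp_vd this] show ?thesis unfolding F_def[abs_def] by simp
    qed
    moreover have "exp (r1 * of_real x) * (k * exp ((r2 - r1) * of_real x)) + r1 * exp (r1 * of_real x) * (dd + k * Gf (r2 - r1) x) = F' x"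
    proof -
      have "exp (r1 * of_real x) * (k * exp ((r2 - r1) * of_real x)) = k * exp (r2 * of_real x)"
        using eexp[of x] by (simp only: mult.left_commute[of "exp (r1 * of_real x)" k])
      then show ?thesis unfolding F'_def F_def by (simp add: mult.assoc add.commute)
    qed
    ultimately show ?thesis by simp
  qed
  have e0: "w 0 = F 0 \<and> w1 0 = F' 0" by (rule ext0[OF d wF dF]) auto
  have dd: "dd = a0" using e0 w0 unfolding F_def by simp
  have kk: "k = a1 - r1 * a0" using e0 w10 dd unfolding F'_def F_def by simp
  have "w t = F t \<and> w1 t = F' t" by (rule ext0[OF d wF dF t])
  then show ?thesis unfolding F'_def F_def dd kk by simp
qed



lemma sq_sum2: fixes A B x y :: real shows "(A*x + B*y)\<^sup>2 \<le> 2*(A\<^sup>2 + B\<^sup>2)*(x\<^sup>2 + y\<^sup>2)"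
proof -
  have "0 \<le> (A*x - B*y)\<^sup>2" by simp
  have "0 \<le> A\<^sup>2*y\<^sup>2 + B\<^sup>2*x\<^sup>2" by simp
  show ?thesis using \<open>0 \<le> (A*x - B*y)\<^sup>2\<close> \<open>0 \<le> A\<^sup>2*y\<^sup>2 + B\<^sup>2*x\<^sup>2\<close>
    by (simp add: power2_eq_square algebra_simps)
qed

lemma sq_le2: fixes p1 p2 :: real shows "(p1 + p2)\<^sup>2 \<le> 2*p1\<^sup>2 + 2*p2\<^sup>2"
proof -
  have "0 \<le> (p1 - p2)\<^sup>2" by simp
  then show ?thesis by (simp add: power2_eq_square algebra_simps)
qed

lemma real_roots_repr:
  fixes b q \<sigma> :: real
  assumes sol: "damped_ode_sol b q a0 a1 w w1" and t: "t \<ge> 0"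
    and \<sigma>: "\<sigma>\<^sup>2 = b\<^sup>2 - 4*q"
  defines "\<rho>1 \<equiv> (\<sigma> - b)/2" and "\<rho>2 \<equiv> (- b - \<sigma>)/2"
  shows "w t = complex_of_real (exp (\<rho>1 * t)) * (a0 + (a1 - of_real \<rho>1 * a0) * Gf (- of_real \<sigma>) t) \<and>
         w1 t = of_real \<rho>1 * w t + (a1 - of_real \<rho>1 * a0) * of_real (exp (\<rho>2 * t))"
proof -
  have v1: "complex_of_real \<rho>1 + of_real \<rho>2 = - of_real b" unfolding \<rho>1_def \<rho>2_def
    by (simp add: field_simps)
  have "\<rho>1 * \<rho>2 = q" unfolding \<rho>1_def \<rho>2_def using \<sigma>
    by (simp add: field_simps power2_eq_square)
  then have v2: "complex_of_real \<rho>1 * of_real \<rho>2 = of_real q" by (metis of_real_mult)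
  have d: "complex_of_real \<rho>2 - of_real \<rho>1 = - of_real \<sigma>" unfolding \<rho>1_def \<rho>2_def
    by (simp add: field_simps)
  show ?thesis using ode_repr[OF v1 v2 sol t] unfolding d
    by (simp add: exp_of_real[symmetric])
qed

lemma Gf_real:
  assumes "\<sigma> \<noteq> 0"
  shows "Gf (- complex_of_real \<sigma>) t = of_real ((1 - exp (- \<sigma> * t)) / \<sigma>)"
proof -
  have "exp (- complex_of_real \<sigma> * of_real t) = of_real (exp (- \<sigma> * t))"
    by (simp add: exp_of_real[symmetric])
  then show ?thesis using assms unfolding Gf_def by (simp add: field_simps)
qed

lemma caseA:
  fixes b s :: real
  assumes b: "b > 0" and s: "s > 0"
  shows "\<exists>C>0. \<forall>q a0 a1 w w1 t. q \<ge> 0 \<and> s \<le> sqrt (b\<^sup>2 - 4*q) \<and> damped_ode_sol b q a0 a1 w w1 \<and> t \<ge> 0 \<longrightarrow>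
     (cmod (w t))\<^sup>2 \<le> C * exp ((- b + sqrt (b\<^sup>2 - 4*q)) * t) * ((cmod a0)\<^sup>2 + (cmod a1)\<^sup>2) \<and>
     (cmod (w1 t))\<^sup>2 \<le> C * (exp ((- b + sqrt (b\<^sup>2 - 4*q)) * t) * q\<^sup>2 * ((cmod a0)\<^sup>2 + (cmod a1)\<^sup>2)
                            + exp ((- b - sqrt (b\<^sup>2 - 4*q)) * t) * (cmod a1)\<^sup>2)"
proof -
  define A where "A = 1 + b/(2* s)"
  define B where "B = 1/s"
  define C1 where "C1 = 2*(A\<^sup>2 + B\<^sup>2)"
  define C2 where "C2 = (8*C1+16)/b\<^sup>2 + 4"
  have C1pos: "C1 > 0" unfolding C1_def B_def using s by (simp add: add_nonneg_pos)
  have C2pos: "C2 > 0" unfolding C2_def using C1pos b by (simp add: add_nonneg_pos)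
  show ?thesis
  proof (intro exI[of _ "C1 + C2"] conjI allI impI)
    show "C1 + C2 > 0" using C1pos C2pos by simp
    fix q :: real and a0 a1 :: complex and w w1 :: "real \<Rightarrow> complex" and t :: real
    assume H: "q \<ge> 0 \<and> s \<le> sqrt (b\<^sup>2 - 4*q) \<and> damped_ode_sol b q a0 a1 w w1 \<and> t \<ge> 0"
    then have q: "q \<ge> 0" and sl: "s \<le> sqrt (b\<^sup>2 - 4*q)" and sol: "damped_ode_sol b q a0 a1 w w1"
      and t: "t \<ge> 0" by auto
    define \<sigma> where "\<sigma> = sqrt (b\<^sup>2 - 4*q)"
    have Dpos: "b\<^sup>2 - 4*q > 0" using sl s by (metis less_le_trans real_sqrt_le_0_iff not_le)
    have \<sigma>2: "\<sigma>\<^sup>2 = b\<^sup>2 - 4*q" unfolding \<sigma>_def using Dpos by simp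
    have \<sigma>s: "s \<le> \<sigma>" using sl \<sigma>_def by simp
    have \<sigma>b: "\<sigma> \<le> b"
    proof -
      have "\<sigma> \<le> sqrt (b\<^sup>2)" unfolding \<sigma>_def using q by (intro real_sqrt_le_mono) simp
      then show ?thesis using b by simp
    qed
    define \<rho>1 where "\<rho>1 = (\<sigma> - b)/2"
    define \<rho>2 where "\<rho>2 = (- b - \<sigma>)/2"
    define x where "x = cmod a0"
    define y where "y = cmod a1"
    define c where "c = a1 - of_real \<rho>1 * a0"
    define g where "g = (1 - exp (- \<sigma> * t)) / \<sigma>"
    define Ep where "Ep = exp ((- b + \<sigma>) * t)"
    define Em where "Em = exp ((- b - \<sigma>) * t)"
    have x0: "x \<ge> 0" and y0: "y \<ge> 0" unfolding x_def y_def by auto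
    have rep: "w t = complex_of_real (exp (\<rho>1 * t)) * (a0 + c * of_real g) \<and>
         w1 t = of_real \<rho>1 * w t + c * of_real (exp (\<rho>2 * t))"
      using real_roots_repr[OF sol t \<sigma>2] Gf_real[of \<sigma> t] \<sigma>s s
      unfolding \<rho>1_def \<rho>2_def c_def g_def by auto
    have g0: "0 \<le> g" unfolding g_def using \<sigma>s s t
      by (intro divide_nonneg_pos) (auto simp: mult_nonneg_nonneg)
    have g1: "g \<le> 1/s"
    proof -
      have "g \<le> 1/\<sigma>" unfolding g_def using \<sigma>s s by (intro divide_right_mono) auto
      also have "\<dots> \<le> 1/s" using \<sigma>s s by (intro divide_left_mono) auto
      finally show ?thesis .
    qed
    have r1abs: "\<bar>\<rho>1\<bar> \<le> b/2" unfolding \<rho>1_def using \<sigma>b \<sigma>s s by auto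
    have r2abs: "\<bar>\<rho>2\<bar> \<ge> b/2" unfolding \<rho>2_def using \<sigma>s s by auto
    have r12: "\<rho>1 * \<rho>2 = q" unfolding \<rho>1_def \<rho>2_def using \<sigma>2
      by (simp add: field_simps power2_eq_square)
    have r1q: "\<bar>\<rho>1\<bar> * (b/2) \<le> q"
    proof -
      have "\<bar>\<rho>1\<bar> * (b/2) \<le> \<bar>\<rho>1\<bar> * \<bar>\<rho>2\<bar>" using r2abs by (intro mult_left_mono) auto
      also have "\<dots> = q" using r12 q by (metis abs_mult abs_of_nonneg)
      finally show ?thesis .
    qed
    have r1sq: "\<rho>1\<^sup>2 \<le> 4*q\<^sup>2/b\<^sup>2"
    proof -
      have "\<bar>\<rho>1\<bar> \<le> 2*q/b" using r1q b by (simp add: field_simps)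
      then have "\<bar>\<rho>1\<bar>\<^sup>2 \<le> (2*q/b)\<^sup>2" by (intro power_mono) auto
      then show ?thesis by (simp add: power_divide power_mult_distrib)
    qed
    have cb: "cmod c \<le> y + \<bar>\<rho>1\<bar> * x"
    proof -
      have "cmod c \<le> cmod a1 + cmod (of_real \<rho>1 * a0)" unfolding c_def by (rule norm_triangle_ineq4)
      then show ?thesis unfolding x_def y_def by (simp add: norm_mult)
    qed
    have inner: "cmod (a0 + c * of_real g) \<le> A*x + B*y"
    proof -
      have "cmod (a0 + c * of_real g) \<le> x + cmod c * g"
        unfolding x_def using norm_triangle_ineq[of a0 "c * of_real g"] g0 by (simp add: norm_mult)
      also have "\<dots> \<le> x + (y + (b/2) * x) * (1/s)"
      proof -
        have "cmod c \<le> y + (b/2) * x" using cb r1abs x0 by (meson add_left_mono mult_right_mono order_trans)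
        then show ?thesis using g0 g1 x0 y0 b by (intro add_left_mono mult_mono) auto
      qed
      also have "\<dots> = A*x + B*y" unfolding A_def B_def using s by (simp add: field_simps)
      finally show ?thesis .
    qed
    have E1sq: "(exp (\<rho>1 * t))\<^sup>2 = Ep" unfolding Ep_def \<rho>1_def
      by (simp add: exp_double[symmetric] power2_eq_square exp_add[symmetric] field_simps)
    have E2sq: "(exp (\<rho>2 * t))\<^sup>2 = Em" unfolding Em_def \<rho>2_def
      by (simp add: power2_eq_square exp_add[symmetric] field_simps)
    have EmEp: "Em \<le> Ep" unfolding Em_def Ep_def using \<sigma>s s t by (simp add: mult_right_mono)
    have wsq: "(cmod (w t))\<^sup>2 \<le> C1 * Ep * (x\<^sup>2 + y\<^sup>2)"
    proof -
      have "cmod (w t) = exp (\<rho>1 * t) * cmod (a0 + c * of_real g)" using rep by (simp add: norm_mult)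
      also have "\<dots> \<le> exp (\<rho>1 * t) * (A*x + B*y)" by (intro mult_left_mono inner) simp
      finally have "(cmod (w t))\<^sup>2 \<le> (exp (\<rho>1 * t) * (A*x + B*y))\<^sup>2" by (intro power_mono) auto
      also have "\<dots> = Ep * (A*x + B*y)\<^sup>2" using E1sq by (simp add: power_mult_distrib)
      also have "\<dots> \<le> Ep * (C1 * (x\<^sup>2 + y\<^sup>2))" unfolding C1_def Ep_def
        by (intro mult_left_mono sq_sum2) simp
      finally show ?thesis by (simp add: mult_ac)
    qed
    have w1sq: "(cmod (w1 t))\<^sup>2 \<le> C2 * (Ep * q\<^sup>2 * (x\<^sup>2 + y\<^sup>2) + Em * y\<^sup>2)"
    proof -
      have "cmod (w1 t) \<le> \<bar>\<rho>1\<bar> * cmod (w t) + cmod c * exp (\<rho>2 * t)"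
        using rep norm_triangle_ineq[of "of_real \<rho>1 * w t" "c * of_real (exp (\<rho>2 * t))"]
        by (simp add: norm_mult)
      then have "(cmod (w1 t))\<^sup>2 \<le> (\<bar>\<rho>1\<bar> * cmod (w t) + cmod c * exp (\<rho>2 * t))\<^sup>2"
        by (intro power_mono) auto
      also have "\<dots> \<le> 2 * (\<bar>\<rho>1\<bar> * cmod (w t))\<^sup>2 + 2 * (cmod c * exp (\<rho>2 * t))\<^sup>2" by (rule sq_le2)
      also have "\<dots> = 2 * \<rho>1\<^sup>2 * (cmod (w t))\<^sup>2 + 2 * (cmod c)\<^sup>2 * Em"
        using E2sq by (simp add: power_mult_distrib)
      also have "\<dots> \<le> 2 * \<rho>1\<^sup>2 * (C1 * Ep * (x\<^sup>2 + y\<^sup>2)) + 2 * (2*y\<^sup>2 + 2*\<rho>1\<^sup>2*x\<^sup>2) * Em"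
      proof -
        have "(cmod c)\<^sup>2 \<le> (y + \<bar>\<rho>1\<bar> * x)\<^sup>2" using cb by (intro power_mono) auto
        also have "\<dots> \<le> 2*y\<^sup>2 + 2*(\<bar>\<rho>1\<bar> * x)\<^sup>2" by (rule sq_le2)
        finally have "(cmod c)\<^sup>2 \<le> 2*y\<^sup>2 + 2*\<rho>1\<^sup>2*x\<^sup>2" by (simp add: power_mult_distrib)
        moreover have "Em \<ge> 0" unfolding Em_def by simp
        ultimately show ?thesis using wsq
          by (intro add_mono mult_left_mono mult_right_mono) auto
      qed
      also have "\<dots> \<le> 2 * \<rho>1\<^sup>2 * (C1 * Ep * (x\<^sup>2 + y\<^sup>2)) + 4*\<rho>1\<^sup>2*(x\<^sup>2 + y\<^sup>2) * Ep + 4*y\<^sup>2*Em"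
      proof -
        have "\<rho>1\<^sup>2*x\<^sup>2 * Em \<le> \<rho>1\<^sup>2*(x\<^sup>2 + y\<^sup>2) * Ep" using EmEp
          by (intro mult_mono mult_left_mono) (auto simp: Em_def)
        then show ?thesis by (simp add: algebra_simps)
      qed
      also have "\<dots> = \<rho>1\<^sup>2 * (2*C1 + 4) * (Ep * (x\<^sup>2 + y\<^sup>2)) + 4*y\<^sup>2*Em" by (simp add: algebra_simps)
      also have "\<dots> \<le> (4*q\<^sup>2/b\<^sup>2) * (2*C1 + 4) * (Ep * (x\<^sup>2 + y\<^sup>2)) + 4*y\<^sup>2*Em"
        using r1sq C1pos by (intro add_right_mono mult_right_mono) (auto simp: Ep_def)
      also have "\<dots> = ((8*C1+16)/b\<^sup>2) * (Ep * q\<^sup>2 * (x\<^sup>2 + y\<^sup>2)) + 4 * (Em * y\<^sup>2)"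
        by (simp add: field_simps)
      also have "\<dots> \<le> C2 * (Ep * q\<^sup>2 * (x\<^sup>2 + y\<^sup>2)) + C2 * (Em * y\<^sup>2)"
      proof (intro add_mono mult_right_mono)
        show "(8*C1+16)/b\<^sup>2 \<le> C2" unfolding C2_def by simp
        show "4 \<le> C2" unfolding C2_def using C1pos b by simp
      qed (auto simp: Ep_def Em_def)
      finally show ?thesis by (simp add: algebra_simps)
    qed
    have N0: "0 \<le> Ep * (x\<^sup>2 + y\<^sup>2)" "0 \<le> Ep * q\<^sup>2 * (x\<^sup>2 + y\<^sup>2) + Em * y\<^sup>2"
      unfolding Ep_def Em_def by auto
      have "C1 * Ep * (x\<^sup>2 + y\<^sup>2) \<le> (C1 + C2) * Ep * (x\<^sup>2 + y\<^sup>2)"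
        using C2pos N0 by (intro mult_right_mono) (auto simp: Ep_def)
      from order_trans[OF wsq this]
      show "(cmod (w t))\<^sup>2 \<le> (C1 + C2) * exp ((- b + sqrt (b\<^sup>2 - 4*q)) * t) * ((cmod a0)\<^sup>2 + (cmod a1)\<^sup>2)"
        unfolding Ep_def \<sigma>_def x_def y_def .
      have "C2 * (Ep * q\<^sup>2 * (x\<^sup>2 + y\<^sup>2) + Em * y\<^sup>2) \<le> (C1 + C2) * (Ep * q\<^sup>2 * (x\<^sup>2 + y\<^sup>2) + Em * y\<^sup>2)"
        using C1pos N0 by (intro mult_right_mono) auto
      from order_trans[OF w1sq this]
      show "(cmod (w1 t))\<^sup>2 \<le> (C1 + C2) * (exp ((- b + sqrt (b\<^sup>2 - 4*q)) * t) * q\<^sup>2 * ((cmod a0)\<^sup>2 + (cmod a1)\<^sup>2)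
                            + exp ((- b - sqrt (b\<^sup>2 - 4*q)) * t) * (cmod a1)\<^sup>2)"
        unfolding Ep_def Em_def \<sigma>_def x_def y_def .
  qed
qed



lemma cmod_iexp_minus1: "cmod (exp (\<i> * complex_of_real \<theta>) - 1) \<le> \<bar>\<theta>\<bar>"
proof -
  have e: "exp (\<i> * complex_of_real \<theta>) - 1 = Complex (cos \<theta> - 1) (sin \<theta>)"
    by (simp add: complex_eq_iff cis_conv_exp[symmetric])
  have "(cos \<theta> - 1)\<^sup>2 + (sin \<theta>)\<^sup>2 = 2 - 2 * cos \<theta>"
    using sin_cos_squared_add[of \<theta>] by (simp add: power2_eq_square algebra_simps)
  also have "\<dots> = 4 * (sin (\<theta>/2))\<^sup>2" using cos_double_sin[of "\<theta>/2"] by simp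
  also have "\<dots> \<le> 4 * (\<theta>/2)\<^sup>2"
  proof -
    have "\<bar>sin (\<theta>/2)\<bar>\<^sup>2 \<le> \<bar>\<theta>/2\<bar>\<^sup>2" by (intro power_mono abs_sin_x_le_abs_x) simp
    then show ?thesis by (simp only: power2_abs)
  qed
  also have "\<dots> = \<theta>\<^sup>2" by (simp add: power2_eq_square)
  finally have "sqrt ((cos \<theta> - 1)\<^sup>2 + (sin \<theta>)\<^sup>2) \<le> sqrt (\<theta>\<^sup>2)" by (rule real_sqrt_le_mono)
  then show ?thesis unfolding e by (simp add: complex_norm)
qed

lemma lin_exp: fixes b s t :: real assumes "b > 0" "s > 0" "t \<ge> 0"
  shows "3 + b/2 * t \<le> (3 + b/s) * exp (s*t/2)"
proof -
  have "s*t/2 \<le> exp (s*t/2)" using exp_ge_add_one_self[of "s*t/2"] by linarith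
  then have "(b/s) * (s*t/2) \<le> (b/s) * exp (s*t/2)" using assms by (intro mult_left_mono) auto
  then have a: "b/2 * t \<le> (b/s) * exp (s*t/2)" using assms by (simp add: field_simps)
  have "1 \<le> exp (s*t/2)" using assms by simp
  then have "3 \<le> 3 * exp (s*t/2)" by simp
  moreover have "(3 + b/s) * exp (s*t/2) = 3 * exp (s*t/2) + (b/s) * exp (s*t/2)" by (rule distrib_right)
  ultimately show ?thesis using a by linarith
qed

lemma caseB2:
  fixes b s q t :: real
  assumes b: "b > 0" and s: "s > 0" and D: "b\<^sup>2 - 4*q < 0"
    and sol: "damped_ode_sol b q a0 a1 w w1" and t: "t \<ge> 0"
  shows "q * (cmod (w t))\<^sup>2 \<le> 2*(3 + b/s)\<^sup>2 * exp ((- b + s) * t) * (q * (cmod a0)\<^sup>2 + (cmod a1)\<^sup>2) \<and>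
         (cmod (w1 t))\<^sup>2 \<le> 2*(3 + b/s)\<^sup>2 * exp ((- b + s) * t) * (q * (cmod a0)\<^sup>2 + (cmod a1)\<^sup>2)"
proof -
  define \<omega> where "\<omega> = sqrt (4*q - b\<^sup>2) / 2"
  have \<omega>pos: "\<omega> > 0" unfolding \<omega>_def using D by simp
  have \<omega>2: "\<omega>\<^sup>2 = q - b\<^sup>2/4" unfolding \<omega>_def using D by (simp add: power_divide)
  have q: "q > 0" using D b by (smt (verit) zero_le_power2)
  define r1 where "r1 = Complex (-b/2) \<omega>"
  define r2 where "r2 = Complex (-b/2) (-\<omega>)"
  have v1: "r1 + r2 = - complex_of_real b" unfolding r1_def r2_def by (simp add: complex_eq_iff)
  have v2: "r1 * r2 = complex_of_real q" unfolding r1_def r2_def using \<omega>2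
    by (simp add: complex_eq_iff power2_eq_square field_simps)
  define x where "x = cmod a0"
  define y where "y = cmod a1"
  define c where "c = a1 - r1 * a0"
  define G where "G = Gf (r2 - r1) t"
  define R where "R = sqrt q"
  define h where "h = exp (- b/2 * t)"
  have x0: "x \<ge> 0" and y0: "y \<ge> 0" and R0: "R \<ge> 0" and h0: "h > 0"
    unfolding x_def y_def R_def h_def using q by auto
  have rep: "w t = exp (r1 * of_real t) * (a0 + c * G) \<and> w1 t = r1 * w t + c * exp (r2 * of_real t)"
    using ode_repr[OF v1 v2 sol t] unfolding c_def G_def by simp
  have ne1: "cmod (exp (r1 * of_real t)) = h" unfolding r1_def h_def by simp
  have ne2: "cmod (exp (r2 * of_real t)) = h" unfolding r2_def h_def by simp
  have \<delta>: "r2 - r1 = \<i> * complex_of_real (-2*\<omega>)" unfolding r1_def r2_def by (simp add: complex_eq_iff)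
  have \<delta>n: "cmod (r2 - r1) = 2*\<omega>" unfolding \<delta> using \<omega>pos by (simp add: norm_mult)
  have Gd: "G = (exp (\<i> * complex_of_real (-2*\<omega>*t)) - 1) / (r2 - r1)"
    unfolding G_def Gf_def using \<delta> \<omega>pos by (auto simp: mult.assoc)
  have Gt: "cmod G \<le> t"
  proof -
    have "cmod G = cmod (exp (\<i> * complex_of_real (-2*\<omega>*t)) - 1) / (2*\<omega>)"
      unfolding Gd using \<delta>n by (simp add: norm_divide)
    also have "\<dots> \<le> \<bar>-2*\<omega>*t\<bar> / (2*\<omega>)" using \<omega>pos by (intro divide_right_mono cmod_iexp_minus1) auto
    also have "\<dots> = t" using \<omega>pos t by (simp add: abs_mult)
    finally show ?thesis .
  qed
  have Gw: "\<omega> * cmod G \<le> 1"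
  proof -
    have "cmod (exp (\<i> * complex_of_real (-2*\<omega>*t)) - 1) \<le> cmod (exp (\<i> * complex_of_real (-2*\<omega>*t))) + 1"
      using norm_triangle_ineq4[of "exp (\<i> * complex_of_real (-2*\<omega>*t))" 1] by simp
    then have n2: "cmod (exp (\<i> * complex_of_real (-2*\<omega>*t)) - 1) \<le> 2" by simp
    have "cmod G = cmod (exp (\<i> * complex_of_real (-2*\<omega>*t)) - 1) / (2*\<omega>)"
      unfolding Gd using \<delta>n by (simp add: norm_divide)
    then have "\<omega> * cmod G = cmod (exp (\<i> * complex_of_real (-2*\<omega>*t)) - 1) / 2" using \<omega>pos by simp
    then show ?thesis using n2 by simp
  qed
  have r1n: "cmod r1 = R" unfolding r1_def R_def complex_norm using \<omega>2
    by (simp add: power_divide)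
  have Rle: "R \<le> b/2 + \<omega>"
  proof -
    have "R = sqrt ((b/2)\<^sup>2 + \<omega>\<^sup>2)" unfolding R_def using \<omega>2 by (simp add: power_divide)
    also have "\<dots> \<le> sqrt ((b/2 + \<omega>)\<^sup>2)" using b \<omega>pos
      by (intro real_sqrt_le_mono) (simp add: power2_eq_square algebra_simps)
    also have "\<dots> = b/2 + \<omega>" using b \<omega>pos by simp
    finally show ?thesis .
  qed
  have RG: "R * cmod G \<le> b/2 * t + 1"
  proof -
    have "R * cmod G \<le> (b/2 + \<omega>) * cmod G" using Rle by (intro mult_right_mono) auto
    also have "\<dots> = b/2 * cmod G + \<omega> * cmod G" by (simp add: algebra_simps)
    also have "\<dots> \<le> b/2 * t + 1" using Gt Gw b by (intro add_mono mult_left_mono) auto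
    finally show ?thesis .
  qed
  have cb: "cmod c \<le> R*x + y"
  proof -
    have "cmod c \<le> cmod a1 + cmod (r1 * a0)" unfolding c_def by (rule norm_triangle_ineq4)
    then show ?thesis unfolding x_def y_def using r1n by (simp add: norm_mult)
  qed
  define \<Lambda> where "\<Lambda> = 3 + b/2 * t"
  have Rw: "R * cmod (w t) \<le> h * (b/2 * t + 2) * (R*x + y)"
  proof -
    have "cmod (a0 + c * G) \<le> x + cmod c * cmod G"
      unfolding x_def using norm_triangle_ineq[of a0 "c * G"] by (simp add: norm_mult)
    then have "R * cmod (a0 + c * G) \<le> R * (x + cmod c * cmod G)" using R0 by (intro mult_left_mono)
    also have "\<dots> = R*x + cmod c * (R * cmod G)" by (simp add: algebra_simps)
    also have "\<dots> \<le> R*x + (R*x + y) * (b/2 * t + 1)"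
      using cb RG R0 x0 y0 by (intro add_left_mono mult_mono) auto
    also have "\<dots> \<le> (b/2 * t + 2) * (R*x + y)" using R0 x0 y0 b t
      by (simp add: algebra_simps)
    finally have "R * cmod (a0 + c * G) \<le> (b/2 * t + 2) * (R*x + y)" .
    moreover have "cmod (w t) = h * cmod (a0 + c * G)" using rep ne1 by (simp add: norm_mult)
    ultimately show ?thesis using h0
      by (metis (no_types, lifting) mult.assoc mult.left_commute mult_le_cancel_left_pos)
  qed
  have Rw': "R * cmod (w t) \<le> h * \<Lambda> * (R*x + y)"
  proof -
    have "h * (b/2 * t + 2) * (R*x + y) \<le> h * \<Lambda> * (R*x + y)" unfolding \<Lambda>_def using h0 R0 x0 y0
      by (intro mult_right_mono mult_left_mono) auto
    with Rw show ?thesis by linarith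
  qed
  have w1b: "cmod (w1 t) \<le> h * \<Lambda> * (R*x + y)"
  proof -
    have "cmod (w1 t) \<le> cmod (r1 * w t) + cmod (c * exp (r2 * of_real t))"
      using rep norm_triangle_ineq by simp
    also have "\<dots> = R * cmod (w t) + cmod c * h" using r1n ne2 by (simp add: norm_mult)
    also have "\<dots> \<le> h * (b/2 * t + 2) * (R*x + y) + (R*x + y) * h"
      using Rw cb h0 by (intro add_mono mult_right_mono) auto
    also have "\<dots> = h * \<Lambda> * (R*x + y)" unfolding \<Lambda>_def by (simp add: algebra_simps)
    finally show ?thesis .
  qed
  have sq: "(h * \<Lambda> * (R*x + y))\<^sup>2 \<le> 2*(3 + b/s)\<^sup>2 * exp ((- b + s) * t) * (q * x\<^sup>2 + y\<^sup>2)"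
  proof -
    have L0: "\<Lambda> \<ge> 0" unfolding \<Lambda>_def using b t by simp
    have "\<Lambda>\<^sup>2 \<le> ((3 + b/s) * exp (s*t/2))\<^sup>2" unfolding \<Lambda>_def
      using lin_exp[OF b s t] L0 \<Lambda>_def by (intro power_mono) auto
    also have "\<dots> = (3 + b/s)\<^sup>2 * exp (s*t)"
      by (simp add: power_mult_distrib exp_double[symmetric] power2_eq_square exp_add[symmetric])
    finally have L2: "\<Lambda>\<^sup>2 \<le> (3 + b/s)\<^sup>2 * exp (s*t)" .
    have h2: "h\<^sup>2 = exp (- b * t)" unfolding h_def
      by (simp add: power2_eq_square exp_add[symmetric])
    have Rxy: "(R*x + y)\<^sup>2 \<le> 2 * (q * x\<^sup>2 + y\<^sup>2)"
      using sq_le2[of "R*x" y] q unfolding R_def by (simp add: power_mult_distrib)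
    have "(h * \<Lambda> * (R*x + y))\<^sup>2 = h\<^sup>2 * \<Lambda>\<^sup>2 * (R*x + y)\<^sup>2" by (simp add: power_mult_distrib)
    also have "\<dots> \<le> exp (- b * t) * ((3 + b/s)\<^sup>2 * exp (s*t)) * (2 * (q * x\<^sup>2 + y\<^sup>2))"
      unfolding h2 using L2 Rxy by (intro mult_mono) auto
    also have "\<dots> = 2*(3 + b/s)\<^sup>2 * (exp (- b * t) * exp (s*t)) * (q * x\<^sup>2 + y\<^sup>2)"
      by (simp only: mult_ac)
    also have "\<dots> = 2*(3 + b/s)\<^sup>2 * exp ((- b + s) * t) * (q * x\<^sup>2 + y\<^sup>2)"
      by (simp only: distrib_right exp_add)
    finally show ?thesis .
  qed
  have "q * (cmod (w t))\<^sup>2 = (R * cmod (w t))\<^sup>2" unfolding R_def using q by (simp add: power_mult_distrib)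
  also have "\<dots> \<le> (h * \<Lambda> * (R*x + y))\<^sup>2" using Rw' R0 by (intro power_mono) auto
  finally have A: "q * (cmod (w t))\<^sup>2 \<le> 2*(3 + b/s)\<^sup>2 * exp ((- b + s) * t) * (q * x\<^sup>2 + y\<^sup>2)" using sq by linarith
  have "(cmod (w1 t))\<^sup>2 \<le> (h * \<Lambda> * (R*x + y))\<^sup>2" using w1b by (intro power_mono) auto
  then have B: "(cmod (w1 t))\<^sup>2 \<le> 2*(3 + b/s)\<^sup>2 * exp ((- b + s) * t) * (q * x\<^sup>2 + y\<^sup>2)" using sq by linarith
  show ?thesis using A B unfolding x_def y_def by simp
qed


lemma real_G:
  fixes \<sigma> t :: real assumes "\<sigma> \<ge> 0" "t \<ge> 0"
  shows "\<exists>g. Gf (- complex_of_real \<sigma>) t = of_real g \<and> 0 \<le> g \<and> g \<le> t \<and> (\<sigma> > 0 \<longrightarrow> g \<le> 1/\<sigma>)"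
proof (cases "\<sigma> = 0")
  case True then show ?thesis using assms by (intro exI[of _ t]) (simp add: Gf_def)
next
  case False
  then have sp: "\<sigma> > 0" using assms by simp
  define g where "g = (1 - exp (- \<sigma> * t)) / \<sigma>"
  have "Gf (- complex_of_real \<sigma>) t = of_real g" unfolding g_def using Gf_real False by simp
  moreover have "0 \<le> g" unfolding g_def using sp assms by (intro divide_nonneg_pos) (auto simp: mult_nonneg_nonneg)
  moreover have "g \<le> t"
  proof -
    have "1 + (- \<sigma> * t) \<le> exp (- \<sigma> * t)" by (rule exp_ge_add_one_self)
    then have "1 - exp (- \<sigma> * t) \<le> \<sigma> * t" by simp
    then have "g \<le> (\<sigma> * t) / \<sigma>" unfolding g_def using sp by (intro divide_right_mono) auto
    then show ?thesis using sp by simp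
  qed
  moreover have "g \<le> 1/\<sigma>" unfolding g_def using sp by (intro divide_right_mono) auto
  ultimately show ?thesis by blast
qed

lemma keyK:
  fixes \<sigma> s t g :: real
  assumes s: "s > 0" and \<sigma>0: "\<sigma> \<ge> 0" and \<sigma>s: "\<sigma> \<le> s" and t: "t \<ge> 0" and g0: "0 \<le> g" and gt: "g \<le> t"
    and g1: "\<sigma> > 0 \<longrightarrow> g \<le> 1/\<sigma>"
  shows "exp (\<sigma>*t/2) * (1 + g) \<le> (1 + 4/s) * exp (s*t/2)"
proof (cases "\<sigma> \<le> s/2")
  case True
  have "\<sigma> * t \<le> (s/2) * t" using True t by (rule mult_right_mono)
  then have "\<sigma>*t/2 \<le> s*t/4" by linarith
  then have e1: "exp (\<sigma>*t/2) \<le> exp (s*t/4)" by simp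
  have "s*t/4 \<le> exp (s*t/4)" using exp_ge_add_one_self[of "s*t/4"] by linarith
  then have "(4/s) * (s*t/4) \<le> (4/s) * exp (s*t/4)" using s by (intro mult_left_mono) auto
  then have tt: "t \<le> (4/s) * exp (s*t/4)" using s by simp
  have one: "1 \<le> exp (s*t/4)" using s t by simp
  have "1 + g \<le> exp (s*t/4) + (4/s) * exp (s*t/4)" using one tt gt by linarith
  then have "1 + g \<le> (1 + 4/s) * exp (s*t/4)" by (simp add: distrib_right)
  then have "exp (\<sigma>*t/2) * (1 + g) \<le> exp (s*t/4) * ((1 + 4/s) * exp (s*t/4))"
    using e1 g0 by (intro mult_mono) auto
  also have "\<dots> = (1 + 4/s) * (exp (s*t/4) * exp (s*t/4))" by simp
  also have "exp (s*t/4) * exp (s*t/4) = exp (s*t/2)" by (simp add: exp_add[symmetric])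
  finally show ?thesis by simp
next
  case False
  then have sp: "\<sigma> > 0" and h: "s/2 < \<sigma>" using s by auto
  have "g \<le> 1/\<sigma>" using g1 sp by simp
  also have "1/\<sigma> \<le> 2/s" using h s sp by (simp add: field_simps)
  finally have "1 + g \<le> 1 + 4/s" using s by (simp add: field_simps)
  moreover have "exp (\<sigma>*t/2) \<le> exp (s*t/2)" using \<sigma>s t by (simp add: mult_right_mono)
  ultimately have "exp (\<sigma>*t/2) * (1 + g) \<le> exp (s*t/2) * (1 + 4/s)"
    using g0 s by (intro mult_mono) auto
  then show ?thesis by (simp add: mult.commute)
qed

lemma caseB1:
  fixes b s q t \<theta> :: real
  assumes b: "b > 0" and s: "s > 0" and \<theta>: "\<theta> > 0" and q\<theta>: "q \<ge> \<theta>"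
    and D0: "b\<^sup>2 - 4*q \<ge> 0" and Ds: "b\<^sup>2 - 4*q < s\<^sup>2"
    and sol: "damped_ode_sol b q a0 a1 w w1" and t: "t \<ge> 0"
  shows "q * (cmod (w t))\<^sup>2 \<le> (b\<^sup>2/4 + 1) * 2 * ((1 + 4/s) * (1 + b/2)\<^sup>2)\<^sup>2 * (1 + 1/\<theta>) * exp ((- b + s) * t) * (q * (cmod a0)\<^sup>2 + (cmod a1)\<^sup>2) \<and>
         (cmod (w1 t))\<^sup>2 \<le> (b\<^sup>2/4 + 1) * 2 * ((1 + 4/s) * (1 + b/2)\<^sup>2)\<^sup>2 * (1 + 1/\<theta>) * exp ((- b + s) * t) * (q * (cmod a0)\<^sup>2 + (cmod a1)\<^sup>2)"
proof -
  define M where "M = (1 + 4/s) * (1 + b/2)\<^sup>2"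
  define Kc where "Kc = 1 + 4/s"
  have q: "q > 0" using q\<theta> \<theta> by simp
  define \<sigma> where "\<sigma> = sqrt (b\<^sup>2 - 4*q)"
  have \<sigma>2: "\<sigma>\<^sup>2 = b\<^sup>2 - 4*q" unfolding \<sigma>_def using D0 by simp
  have \<sigma>0: "\<sigma> \<ge> 0" unfolding \<sigma>_def using D0 by simp
  have \<sigma>s: "\<sigma> < s"
  proof -
    have "\<sigma> < sqrt (s\<^sup>2)" unfolding \<sigma>_def using Ds by (intro real_sqrt_less_mono)
    then show ?thesis using s by simp
  qed
  have \<sigma>b: "\<sigma> \<le> b"
  proof -
    have "\<sigma> \<le> sqrt (b\<^sup>2)" unfolding \<sigma>_def using q by (intro real_sqrt_le_mono) simp
    then show ?thesis using b by simp
  qed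
  define \<rho>1 where "\<rho>1 = (\<sigma> - b)/2"
  define \<rho>2 where "\<rho>2 = (- b - \<sigma>)/2"
  define x where "x = cmod a0"
  define y where "y = cmod a1"
  define c where "c = a1 - of_real \<rho>1 * a0"
  define H where "H = exp ((- b + s) * t / 2)"
  have x0: "x \<ge> 0" and y0: "y \<ge> 0" and H0: "H > 0" unfolding x_def y_def H_def by auto
  obtain g where g: "Gf (- complex_of_real \<sigma>) t = of_real g" "0 \<le> g" "g \<le> t" "\<sigma> > 0 \<longrightarrow> g \<le> 1/\<sigma>"
    using real_G[OF \<sigma>0 t] by blast
  have rep: "w t = complex_of_real (exp (\<rho>1 * t)) * (a0 + c * of_real g) \<and>
         w1 t = of_real \<rho>1 * w t + c * of_real (exp (\<rho>2 * t))"
    using real_roots_repr[OF sol t \<sigma>2] g(1) unfolding \<rho>1_def \<rho>2_def c_def by simp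
  have K: "exp (\<sigma>*t/2) * (1 + g) \<le> Kc * exp (s*t/2)" unfolding Kc_def
    using keyK[OF s \<sigma>0 _ t g(2) g(3) g(4)] \<sigma>s by simp
  have r1abs: "\<bar>\<rho>1\<bar> \<le> b/2" unfolding \<rho>1_def using \<sigma>b \<sigma>0 by auto
  have cb: "cmod c \<le> (1 + b/2) * (x + y)"
  proof -
    have "cmod c \<le> cmod a1 + cmod (of_real \<rho>1 * a0)" unfolding c_def by (rule norm_triangle_ineq4)
    also have "\<dots> = y + \<bar>\<rho>1\<bar> * x" unfolding x_def y_def by (simp add: norm_mult)
    also have "\<dots> \<le> y + b/2 * x" using r1abs x0 by (intro add_left_mono mult_right_mono) auto
    also have "\<dots> \<le> (1 + b/2) * (x + y)"
    proof -
      have "(1 + b/2) * (x + y) = y + b/2 * x + (x + b/2 * y)" by (simp add: algebra_simps)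
      moreover have "0 \<le> x + b/2 * y" using x0 y0 b by simp
      ultimately show ?thesis by linarith
    qed
    finally show ?thesis .
  qed
  have Kc1: "Kc \<ge> 1" unfolding Kc_def using s by simp
  have E1: "exp (\<rho>1 * t) = exp (- b * t / 2) * exp (\<sigma> * t / 2)"
    unfolding \<rho>1_def by (simp add: exp_add[symmetric] field_simps)
  have EH: "exp (- b * t / 2) * exp (s * t / 2) = H"
    unfolding H_def by (simp add: exp_add[symmetric] field_simps)
  have wb: "cmod (w t) \<le> Kc * (1 + b/2) * H * (x + y)"
  proof -
    have "cmod (a0 + c * of_real g) \<le> x + cmod c * g"
      unfolding x_def using norm_triangle_ineq[of a0 "c * of_real g"] g(2) by (simp add: norm_mult)
    also have "\<dots> \<le> x + (1 + b/2) * (x + y) * g" using cb g(2) by (intro add_left_mono mult_right_mono)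
    also have "\<dots> \<le> (1 + g) * ((1 + b/2) * (x + y))"
    proof -
      have "(1 + g) * ((1 + b/2) * (x + y)) = (1 + b/2) * (x + y) * g + (x + (y + b/2 * (x + y)))"
        by (simp add: field_simps)
      moreover have "0 \<le> y + b/2 * (x + y)" using x0 y0 b by simp
      ultimately show ?thesis by linarith
    qed
    finally have in1: "cmod (a0 + c * of_real g) \<le> (1 + g) * ((1 + b/2) * (x + y))" .
    have "cmod (w t) = exp (\<rho>1 * t) * cmod (a0 + c * of_real g)" using rep by (simp add: norm_mult)
    also have "\<dots> \<le> exp (\<rho>1 * t) * ((1 + g) * ((1 + b/2) * (x + y)))" using in1 by (intro mult_left_mono) auto
    also have "\<dots> = exp (- b * t / 2) * (exp (\<sigma> * t / 2) * (1 + g)) * ((1 + b/2) * (x + y))"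
      unfolding E1 by (simp add: mult_ac)
    also have "\<dots> \<le> exp (- b * t / 2) * (Kc * exp (s*t/2)) * ((1 + b/2) * (x + y))"
      using K x0 y0 b by (intro mult_right_mono mult_left_mono) auto
    also have "\<dots> = Kc * (1 + b/2) * (exp (- b * t / 2) * exp (s * t / 2)) * (x + y)" by (simp add: mult_ac)
    finally show ?thesis unfolding EH .
  qed
  have bh: "exp (- b * t / 2) \<le> H" unfolding H_def using s t by (simp add: field_simps mult_right_mono)
  have M0: "Kc * (1 + b/2) * H * (x + y) \<ge> 0" using Kc1 b H0 x0 y0 by simp
  have wbM: "cmod (w t) \<le> M * H * (x + y)"
  proof -
    have "Kc * (1 + b/2) * H * (x + y) \<le> Kc * (1 + b/2)\<^sup>2 * H * (x + y)"
      using Kc1 b H0 x0 y0 by (intro mult_right_mono mult_left_mono) (auto simp: power2_eq_square)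
    then show ?thesis using wb unfolding M_def Kc_def by linarith
  qed
  have w1b: "cmod (w1 t) \<le> M * H * (x + y)"
  proof -
    have "cmod (w1 t) \<le> cmod (of_real \<rho>1 * w t) + cmod (c * of_real (exp (\<rho>2 * t)))"
      using rep norm_triangle_ineq by simp
    also have "\<dots> = \<bar>\<rho>1\<bar> * cmod (w t) + cmod c * exp (\<rho>2 * t)" by (simp add: norm_mult)
    also have "\<dots> \<le> b/2 * (Kc * (1 + b/2) * H * (x + y)) + ((1 + b/2) * (x + y)) * (Kc * H)"
    proof (intro add_mono mult_mono)
      show "exp (\<rho>2 * t) \<le> Kc * H"
      proof -
        have "exp (\<rho>2 * t) \<le> exp (- b * t / 2)" unfolding \<rho>2_def using \<sigma>0 t
          by (simp add: field_simps mult_nonneg_nonneg)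
        also have "\<dots> \<le> H" by (rule bh)
        also have "\<dots> \<le> Kc * H" using Kc1 H0 by simp
        finally show ?thesis .
      qed
    qed (use r1abs wb cb b x0 y0 in auto)
    also have "\<dots> = M * H * (x + y)" unfolding M_def Kc_def using s by (simp add: power2_eq_square field_simps)
    finally show ?thesis .
  qed
  have sqb: "(M * H * (x + y))\<^sup>2 \<le> 2 * M\<^sup>2 * (1 + 1/\<theta>) * exp ((- b + s) * t) * (q * x\<^sup>2 + y\<^sup>2)"
  proof -
    have H2: "H\<^sup>2 = exp ((- b + s) * t)" unfolding H_def
      by (simp add: power2_eq_square exp_add[symmetric])
    have xy: "x\<^sup>2 + y\<^sup>2 \<le> (1 + 1/\<theta>) * (q * x\<^sup>2 + y\<^sup>2)"
    proof -
      have "1 \<le> q/\<theta>" using q\<theta> \<theta> by simp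
      then have "1 * x\<^sup>2 \<le> (q/\<theta>) * x\<^sup>2" by (intro mult_right_mono) auto
      also have "\<dots> = (1/\<theta>) * (q * x\<^sup>2)" by simp
      also have "\<dots> \<le> (1 + 1/\<theta>) * (q * x\<^sup>2)" using q by (intro mult_right_mono) auto
      finally have A: "x\<^sup>2 \<le> (1 + 1/\<theta>) * (q * x\<^sup>2)" by simp
      have B: "y\<^sup>2 \<le> (1 + 1/\<theta>) * y\<^sup>2" using \<theta> by (simp add: field_simps)
      have "(1 + 1/\<theta>) * (q * x\<^sup>2 + y\<^sup>2) = (1 + 1/\<theta>) * (q * x\<^sup>2) + (1 + 1/\<theta>) * y\<^sup>2"
        by (rule distrib_left)
      with A B show ?thesis by linarith
    qed
    have "(M * H * (x + y))\<^sup>2 = M\<^sup>2 * H\<^sup>2 * (x + y)\<^sup>2" by (simp add: power_mult_distrib)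
    also have "\<dots> \<le> M\<^sup>2 * H\<^sup>2 * (2 * (x\<^sup>2 + y\<^sup>2))"
      using sq_le2[of x y] by (intro mult_left_mono) auto
    also have "\<dots> \<le> M\<^sup>2 * H\<^sup>2 * (2 * ((1 + 1/\<theta>) * (q * x\<^sup>2 + y\<^sup>2)))"
      using xy by (intro mult_left_mono) auto
    also have "\<dots> = 2 * M\<^sup>2 * (1 + 1/\<theta>) * exp ((- b + s) * t) * (q * x\<^sup>2 + y\<^sup>2)"
      unfolding H2 by (simp add: mult_ac)
    finally show ?thesis .
  qed
  define S where "S = 2 * M\<^sup>2 * (1 + 1/\<theta>) * exp ((- b + s) * t) * (q * x\<^sup>2 + y\<^sup>2)"
  have S0: "S \<ge> 0" unfolding S_def using \<theta> q by simp
  have qb: "q \<le> b\<^sup>2/4" using D0 by simp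
  have MH0: "0 \<le> M * H * (x + y)" unfolding M_def Kc_def using s H0 x0 y0 b by simp
  have "(cmod (w t))\<^sup>2 \<le> (M * H * (x + y))\<^sup>2" using wbM by (intro power_mono) auto
  then have w2: "(cmod (w t))\<^sup>2 \<le> S" unfolding S_def using sqb by linarith
  have "q * (cmod (w t))\<^sup>2 \<le> q * S" using w2 q by (intro mult_left_mono) auto
  also have "\<dots> \<le> (b\<^sup>2/4 + 1) * S" using qb S0 by (intro mult_right_mono) auto
  finally have A: "q * (cmod (w t))\<^sup>2 \<le> (b\<^sup>2/4 + 1) * S" .
  have "(cmod (w1 t))\<^sup>2 \<le> (M * H * (x + y))\<^sup>2" using w1b by (intro power_mono) auto
  then have "(cmod (w1 t))\<^sup>2 \<le> S" unfolding S_def using sqb by linarith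
  also have "\<dots> \<le> (b\<^sup>2/4 + 1) * S" using S0 by (simp add: algebra_simps)
  finally have B: "(cmod (w1 t))\<^sup>2 \<le> (b\<^sup>2/4 + 1) * S" .
  have Seq: "(b\<^sup>2/4 + 1) * S = (b\<^sup>2/4 + 1) * 2 * ((1 + 4/s) * (1 + b/2)\<^sup>2)\<^sup>2 * (1 + 1/\<theta>) * exp ((- b + s) * t) * (q * (cmod a0)\<^sup>2 + (cmod a1)\<^sup>2)"
    unfolding S_def M_def x_def y_def by (simp only: mult_ac)
  show ?thesis using A B unfolding Seq by simp
qed



lemma le_sum_c1: fixes a c1 c2 E Q :: real
  assumes "a \<le> c1 * E * Q" "0 \<le> E * Q" "0 \<le> c2" shows "a \<le> (c1 + c2) * E * Q"
proof -
  have "c1 * E * Q \<le> c1 * E * Q + c2 * (E * Q)" using assms by simp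
  also have "\<dots> = (c1 + c2) * E * Q" by (simp add: algebra_simps)
  finally show ?thesis using assms by linarith
qed

lemma le_sum_c2: fixes a c1 c2 E Q :: real
  assumes "a \<le> c2 * E * Q" "0 \<le> E * Q" "0 \<le> c1" shows "a \<le> (c1 + c2) * E * Q"
  using le_sum_c1[OF assms] by (simp add: add.commute)

lemma caseB:
  fixes b s \<theta> :: real
  assumes b: "b > 0" and s: "s > 0" and \<theta>: "\<theta> > 0"
  shows "\<exists>C>0. \<forall>q a0 a1 w w1 t. q \<ge> \<theta> \<and> b\<^sup>2 - 4*q < s\<^sup>2 \<and> damped_ode_sol b q a0 a1 w w1 \<and> t \<ge> 0 \<longrightarrow>
    q * (cmod (w t))\<^sup>2 \<le> C * exp ((- b + s) * t) * (q * (cmod a0)\<^sup>2 + (cmod a1)\<^sup>2) \<and>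
    (cmod (w1 t))\<^sup>2 \<le> C * exp ((- b + s) * t) * (q * (cmod a0)\<^sup>2 + (cmod a1)\<^sup>2)"
proof -
  define C1 where "C1 = (b\<^sup>2/4 + 1) * 2 * ((1 + 4/s) * (1 + b/2)\<^sup>2)\<^sup>2 * (1 + 1/\<theta>)"
  define C2 where "C2 = 2*(3 + b/s)\<^sup>2"
  have C1p: "C1 > 0" unfolding C1_def using s b \<theta>
    by (intro mult_pos_pos add_nonneg_pos zero_less_power divide_pos_pos) auto
  have C2p: "C2 > 0" unfolding C2_def using s b
    by (intro mult_pos_pos add_nonneg_pos zero_less_power divide_pos_pos) auto
  show ?thesis
  proof (intro exI[of _ "C1 + C2"] conjI allI impI)
    show "C1 + C2 > 0" using C1p C2p by simp
    fix q :: real and a0 a1 :: complex and w w1 :: "real \<Rightarrow> complex" and t :: real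
    assume H: "q \<ge> \<theta> \<and> b\<^sup>2 - 4*q < s\<^sup>2 \<and> damped_ode_sol b q a0 a1 w w1 \<and> t \<ge> 0"
    then have q\<theta>: "q \<ge> \<theta>" and Ds: "b\<^sup>2 - 4*q < s\<^sup>2" and sol: "damped_ode_sol b q a0 a1 w w1"
      and t: "t \<ge> 0" by auto
    have Q0: "0 \<le> exp ((- b + s) * t) * (q * (cmod a0)\<^sup>2 + (cmod a1)\<^sup>2)" using q\<theta> \<theta> by simp
    have "(q * (cmod (w t))\<^sup>2 \<le> (C1 + C2) * exp ((- b + s) * t) * (q * (cmod a0)\<^sup>2 + (cmod a1)\<^sup>2)) \<and>
      ((cmod (w1 t))\<^sup>2 \<le> (C1 + C2) * exp ((- b + s) * t) * (q * (cmod a0)\<^sup>2 + (cmod a1)\<^sup>2))"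
    proof (cases "b\<^sup>2 - 4*q \<ge> 0")
      case True
      from caseB1[OF b s \<theta> q\<theta> True Ds sol t] show ?thesis
        unfolding C1_def[symmetric] using le_sum_c1[OF _ Q0, of _ C1 C2] C2p by (simp add: mult.assoc)
    next
      case False
      then have "b\<^sup>2 - 4*q < 0" by simp
      from caseB2[OF b s this sol t] show ?thesis
        unfolding C2_def[symmetric] using le_sum_c2[OF _ Q0, of _ C2 C1] C1p by (simp add: mult.assoc)
    qed
    then show "q * (cmod (w t))\<^sup>2 \<le> (C1 + C2) * exp ((- b + s) * t) * (q * (cmod a0)\<^sup>2 + (cmod a1)\<^sup>2)"
      and "(cmod (w1 t))\<^sup>2 \<le> (C1 + C2) * exp ((- b + s) * t) * (q * (cmod a0)\<^sup>2 + (cmod a1)\<^sup>2)" by auto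
  qed
qed


lemma le_C: fixes a c1 c z :: real
  assumes "a \<le> c1 * z" "0 \<le> z" "c1 \<le> c" shows "a \<le> c * z"
  using assms order_trans mult_right_mono by blast

theorem lemma3p1:
  fixes b m \<alpha> :: real and n :: nat
  assumes "b > 0" and "m \<ge> 0" and "b\<^sup>2 > 4 * m" and "\<alpha> > 0" and "n \<ge> 1"
  shows "\<exists>C>0. \<forall>(lam::real) (k::nat list) (a0::complex) (a1::complex)
      (w::real \<Rightarrow> complex) (w1::real \<Rightarrow> complex) (t::real).
    lam \<noteq> 0 \<and> length k = n \<and> t \<ge> 0 \<and>
    damped_ode_sol b (\<bar>lam\<bar> powr \<alpha> * hermite_mu n k powr \<alpha> + m) a0 a1 w w1 \<longrightarrow>
    (let \<mu> = hermite_mu n k;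
         L = \<bar>lam\<bar> powr \<alpha> * \<mu> powr \<alpha>;
         T = (1 / \<mu>) * ((1/2) * (b\<^sup>2 / 4 - m)) powr (1 / \<alpha>);
         N = (cmod a0)\<^sup>2 + (cmod a1)\<^sup>2;
         Ep = exp ((- b + sqrt (b\<^sup>2 - 4 * m - 4 * L)) * t);
         Em = exp ((- b - sqrt (b\<^sup>2 - 4 * m - 4 * L)) * t);
         Eh = exp ((- b + sqrt ((1/2) * (b\<^sup>2 - 4 * m))) * t);
         P = (\<bar>lam\<bar> * \<mu>) powr (\<alpha> / 2)
     in (\<bar>lam\<bar> < T \<longrightarrow>
           (cmod (w t))\<^sup>2 \<le> C * Ep * N
         \<and> (cmod (w1 t))\<^sup>2 \<le> C * (Ep * (L + m)\<^sup>2 * N + Em * (cmod a1)\<^sup>2)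
         \<and> (cmod (complex_of_real P * w t))\<^sup>2 \<le> C * Ep * (\<bar>lam\<bar> * \<mu>) powr \<alpha> * N)
      \<and> (\<bar>lam\<bar> > T \<longrightarrow>
           (cmod (w t))\<^sup>2 \<le> C * Eh * N
         \<and> (cmod (w1 t))\<^sup>2 \<le> C * Eh * ((L + m) * (cmod a0)\<^sup>2 + (cmod a1)\<^sup>2)
         \<and> (cmod (complex_of_real P * w t))\<^sup>2 \<le> C * Eh * (L * (cmod a0)\<^sup>2 + (cmod a1)\<^sup>2)))"
proof -
  have b: "b > 0" and m: "m \<ge> 0" and bm: "b\<^sup>2 > 4 * m" and \<alpha>: "\<alpha> > 0" and n: "n \<ge> 1"
    using assms by auto
  define s where "s = sqrt ((1/2) * (b\<^sup>2 - 4 * m))"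
  define \<theta> where "\<theta> = (1/2) * (b\<^sup>2 / 4 - m)"
  have s: "s > 0" unfolding s_def using bm by simp
  have s2: "s\<^sup>2 = (1/2) * (b\<^sup>2 - 4 * m)" unfolding s_def using bm by simp
  have \<theta>: "\<theta> > 0" unfolding \<theta>_def using bm by simp
  have s\<theta>: "s\<^sup>2 = b\<^sup>2 - 4 * m - 4 * \<theta>" unfolding s2 \<theta>_def by (simp add: field_simps)
  obtain CA where CA: "CA > 0" and CAb: "\<forall>q a0 a1 w w1 t. q \<ge> 0 \<and> s \<le> sqrt (b\<^sup>2 - 4*q) \<and> damped_ode_sol b q a0 a1 w w1 \<and> t \<ge> 0 \<longrightarrow>
     (cmod (w t))\<^sup>2 \<le> CA * exp ((- b + sqrt (b\<^sup>2 - 4*q)) * t) * ((cmod a0)\<^sup>2 + (cmod a1)\<^sup>2) \<and>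
     (cmod (w1 t))\<^sup>2 \<le> CA * (exp ((- b + sqrt (b\<^sup>2 - 4*q)) * t) * q\<^sup>2 * ((cmod a0)\<^sup>2 + (cmod a1)\<^sup>2)
                            + exp ((- b - sqrt (b\<^sup>2 - 4*q)) * t) * (cmod a1)\<^sup>2)"
    using caseA[OF b s] by blast
  obtain CB where CB: "CB > 0" and CBb: "\<forall>q a0 a1 w w1 t. q \<ge> \<theta> \<and> b\<^sup>2 - 4*q < s\<^sup>2 \<and> damped_ode_sol b q a0 a1 w w1 \<and> t \<ge> 0 \<longrightarrow>
    q * (cmod (w t))\<^sup>2 \<le> CB * exp ((- b + s) * t) * (q * (cmod a0)\<^sup>2 + (cmod a1)\<^sup>2) \<and>
    (cmod (w1 t))\<^sup>2 \<le> CB * exp ((- b + s) * t) * (q * (cmod a0)\<^sup>2 + (cmod a1)\<^sup>2)"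
    using caseB[OF b s \<theta>] by blast
  define C where "C = CA + CB * (1 + 1/\<theta>) * (1 + m/\<theta>)"
  have f1: "1 \<le> 1 + 1/\<theta>" and f2: "1 \<le> 1 + m/\<theta>" using \<theta> m by auto
  have CBp: "0 \<le> CB * (1 + 1/\<theta>) * (1 + m/\<theta>)" using CB f1 f2 by simp
  have CAC: "CA \<le> C" unfolding C_def using CBp by simp
  have CB1: "CB * (1 + 1/\<theta>) \<le> C"
  proof -
    have "CB * (1 + 1/\<theta>) * 1 \<le> CB * (1 + 1/\<theta>) * (1 + m/\<theta>)" using CB f1 f2 by (intro mult_left_mono) auto
    then show ?thesis unfolding C_def using CA by simp
  qed
  have CB2: "CB * (1 + m/\<theta>) \<le> C"
  proof -
    have "CB * 1 * (1 + m/\<theta>) \<le> CB * (1 + 1/\<theta>) * (1 + m/\<theta>)" using CB f1 f2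
      by (intro mult_right_mono mult_left_mono) auto
    then show ?thesis unfolding C_def using CA by simp
  qed
  have CB0: "CB \<le> C" using CB1 CB f1 by (smt (verit) mult_le_cancel_left1)
  show ?thesis
  proof (intro exI[of _ C] conjI allI impI)
    show "C > 0" unfolding C_def using CA CBp by simp
    fix lam :: real and k :: "nat list" and a0 a1 :: complex and w w1 :: "real \<Rightarrow> complex" and t :: real
    assume H: "lam \<noteq> 0 \<and> length k = n \<and> t \<ge> 0 \<and>
      damped_ode_sol b (\<bar>lam\<bar> powr \<alpha> * hermite_mu n k powr \<alpha> + m) a0 a1 w w1"
    define \<mu> where "\<mu> = hermite_mu n k"
    define L where "L = \<bar>lam\<bar> powr \<alpha> * \<mu> powr \<alpha>"
    define q where "q = L + m"
    define x where "x = cmod a0"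
    define y where "y = cmod a1"
    have lam: "lam \<noteq> 0" and t: "t \<ge> 0" and sol: "damped_ode_sol b q a0 a1 w w1"
      using H unfolding q_def L_def \<mu>_def by auto
    have \<mu>1: "\<mu> \<ge> 1" unfolding \<mu>_def hermite_mu_def using n by simp
    have L0: "L \<ge> 0" unfolding L_def by simp
    have Lprod: "(\<bar>lam\<bar> * \<mu>) powr \<alpha> = L" unfolding L_def using \<mu>1 by (simp add: powr_mult)
    have P2: "((\<bar>lam\<bar> * \<mu>) powr (\<alpha> / 2))\<^sup>2 = L"
    proof -
      have "((\<bar>lam\<bar> * \<mu>) powr (\<alpha> / 2))\<^sup>2 = (\<bar>lam\<bar> * \<mu>) powr (\<alpha> / 2) * (\<bar>lam\<bar> * \<mu>) powr (\<alpha> / 2)"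
        by (simp add: power2_eq_square)
      also have "\<dots> = (\<bar>lam\<bar> * \<mu>) powr \<alpha>" by (simp add: powr_add[symmetric])
      finally show ?thesis using Lprod by simp
    qed
    have Pw: "(cmod (complex_of_real ((\<bar>lam\<bar> * \<mu>) powr (\<alpha> / 2)) * w t))\<^sup>2 = L * (cmod (w t))\<^sup>2"
      using P2 by (simp add: norm_mult power_mult_distrib)
    have Tth: "(1 / \<mu>) * ((1/2) * (b\<^sup>2 / 4 - m)) powr (1 / \<alpha>) = (1/\<mu>) * \<theta> powr (1/\<alpha>)"
      unfolding \<theta>_def by simp
    have thp: "(\<theta> powr (1/\<alpha>)) powr \<alpha> = \<theta>" using \<theta> \<alpha> by (simp add: powr_powr)
    have lamT: "\<bar>lam\<bar> * \<mu> < \<theta> powr (1/\<alpha>) \<longleftrightarrow> \<bar>lam\<bar> < (1/\<mu>) * \<theta> powr (1/\<alpha>)"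
      using \<mu>1 by (simp add: field_simps)
    have lamT2: "\<bar>lam\<bar> * \<mu> > \<theta> powr (1/\<alpha>) \<longleftrightarrow> \<bar>lam\<bar> > (1/\<mu>) * \<theta> powr (1/\<alpha>)"
      using \<mu>1 by (simp add: field_simps)
    have Dq: "b\<^sup>2 - 4 * m - 4 * L = b\<^sup>2 - 4 * q" unfolding q_def by simp
    have sh: "sqrt ((1/2) * (b\<^sup>2 - 4 * m)) = s" unfolding s_def ..
    have N0: "0 \<le> x\<^sup>2 + y\<^sup>2" by simp
    have A: "\<bar>lam\<bar> < (1/\<mu>) * \<theta> powr (1/\<alpha>) \<longrightarrow>
           (cmod (w t))\<^sup>2 \<le> C * exp ((- b + sqrt (b\<^sup>2 - 4 * q)) * t) * (x\<^sup>2 + y\<^sup>2)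
         \<and> (cmod (w1 t))\<^sup>2 \<le> C * (exp ((- b + sqrt (b\<^sup>2 - 4 * q)) * t) * q\<^sup>2 * (x\<^sup>2 + y\<^sup>2) + exp ((- b - sqrt (b\<^sup>2 - 4 * q)) * t) * y\<^sup>2)
         \<and> L * (cmod (w t))\<^sup>2 \<le> C * exp ((- b + sqrt (b\<^sup>2 - 4 * q)) * t) * L * (x\<^sup>2 + y\<^sup>2)"
    proof
      assume "\<bar>lam\<bar> < (1/\<mu>) * \<theta> powr (1/\<alpha>)"
      then have "\<bar>lam\<bar> * \<mu> < \<theta> powr (1/\<alpha>)" using lamT by simp
      then have "(\<bar>lam\<bar> * \<mu>) powr \<alpha> < (\<theta> powr (1/\<alpha>)) powr \<alpha>"
        using \<alpha> \<mu>1 by (intro powr_less_mono2) auto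
      then have L\<theta>: "L < \<theta>" using Lprod thp by simp
      have q0: "q \<ge> 0" unfolding q_def using L0 m by simp
      have "s\<^sup>2 \<le> b\<^sup>2 - 4 * q" using s\<theta> L\<theta> unfolding q_def by simp
      then have "sqrt (s\<^sup>2) \<le> sqrt (b\<^sup>2 - 4 * q)" by (rule real_sqrt_le_mono)
      then have sq: "s \<le> sqrt (b\<^sup>2 - 4 * q)" using s by simp
      define Ep where "Ep = exp ((- b + sqrt (b\<^sup>2 - 4 * q)) * t)"
      define Em where "Em = exp ((- b - sqrt (b\<^sup>2 - 4 * q)) * t)"
      have bnd: "(cmod (w t))\<^sup>2 \<le> CA * Ep * (x\<^sup>2 + y\<^sup>2)"
        "(cmod (w1 t))\<^sup>2 \<le> CA * (Ep * q\<^sup>2 * (x\<^sup>2 + y\<^sup>2) + Em * y\<^sup>2)"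
        using CAb[rule_format, of q a0 a1 w w1 t] q0 sq sol t
        unfolding Ep_def Em_def x_def y_def by auto
      have Ep0: "Ep \<ge> 0" and Em0: "Em \<ge> 0" unfolding Ep_def Em_def by auto
      have g1: "(cmod (w t))\<^sup>2 \<le> C * Ep * (x\<^sup>2 + y\<^sup>2)"
        using le_C[of _ CA "Ep * (x\<^sup>2 + y\<^sup>2)" C] bnd(1) Ep0 CAC by (simp add: mult.assoc)
      have g2: "(cmod (w1 t))\<^sup>2 \<le> C * (Ep * q\<^sup>2 * (x\<^sup>2 + y\<^sup>2) + Em * y\<^sup>2)"
        using le_C[of _ CA "Ep * q\<^sup>2 * (x\<^sup>2 + y\<^sup>2) + Em * y\<^sup>2" C] bnd(2) Ep0 Em0 CAC by simp
      have "L * (cmod (w t))\<^sup>2 \<le> L * (C * Ep * (x\<^sup>2 + y\<^sup>2))" using g1 L0 by (rule mult_left_mono)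
      then have g3: "L * (cmod (w t))\<^sup>2 \<le> C * Ep * L * (x\<^sup>2 + y\<^sup>2)" by (simp add: mult_ac)
      show "(cmod (w t))\<^sup>2 \<le> C * exp ((- b + sqrt (b\<^sup>2 - 4 * q)) * t) * (x\<^sup>2 + y\<^sup>2)
         \<and> (cmod (w1 t))\<^sup>2 \<le> C * (exp ((- b + sqrt (b\<^sup>2 - 4 * q)) * t) * q\<^sup>2 * (x\<^sup>2 + y\<^sup>2) + exp ((- b - sqrt (b\<^sup>2 - 4 * q)) * t) * y\<^sup>2)
         \<and> L * (cmod (w t))\<^sup>2 \<le> C * exp ((- b + sqrt (b\<^sup>2 - 4 * q)) * t) * L * (x\<^sup>2 + y\<^sup>2)"
        using g1 g2 g3 unfolding Ep_def Em_def by blast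
    qed
    have B: "\<bar>lam\<bar> > (1/\<mu>) * \<theta> powr (1/\<alpha>) \<longrightarrow>
           (cmod (w t))\<^sup>2 \<le> C * exp ((- b + s) * t) * (x\<^sup>2 + y\<^sup>2)
         \<and> (cmod (w1 t))\<^sup>2 \<le> C * exp ((- b + s) * t) * ((L + m) * x\<^sup>2 + y\<^sup>2)
         \<and> L * (cmod (w t))\<^sup>2 \<le> C * exp ((- b + s) * t) * (L * x\<^sup>2 + y\<^sup>2)"
    proof
      assume "\<bar>lam\<bar> > (1/\<mu>) * \<theta> powr (1/\<alpha>)"
      then have "\<bar>lam\<bar> * \<mu> > \<theta> powr (1/\<alpha>)" using lamT2 by simp
      then have "(\<bar>lam\<bar> * \<mu>) powr \<alpha> > (\<theta> powr (1/\<alpha>)) powr \<alpha>"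
        using \<alpha> \<theta> by (intro powr_less_mono2) auto
      then have L\<theta>: "L > \<theta>" using Lprod thp by simp
      have q\<theta>: "q \<ge> \<theta>" unfolding q_def using L\<theta> m by simp
      have qp: "q > 0" using q\<theta> \<theta> by simp
      have Ds: "b\<^sup>2 - 4 * q < s\<^sup>2" using s\<theta> L\<theta> unfolding q_def by simp
      define Eh where "Eh = exp ((- b + s) * t)"
      have Eh0: "Eh > 0" unfolding Eh_def by simp
      have bnd: "q * (cmod (w t))\<^sup>2 \<le> CB * Eh * (q * x\<^sup>2 + y\<^sup>2)"
        "(cmod (w1 t))\<^sup>2 \<le> CB * Eh * (q * x\<^sup>2 + y\<^sup>2)"
        using CBb[rule_format, of q a0 a1 w w1 t] q\<theta> Ds sol t
        unfolding Eh_def x_def y_def by auto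
      have Q1: "q * x\<^sup>2 + y\<^sup>2 \<le> q * ((1 + 1/\<theta>) * (x\<^sup>2 + y\<^sup>2))"
      proof -
        have "1 \<le> q/\<theta>" using q\<theta> \<theta> by simp
        then have "1 * y\<^sup>2 \<le> (q/\<theta>) * y\<^sup>2" by (intro mult_right_mono) auto
        moreover have "q * ((1 + 1/\<theta>) * (x\<^sup>2 + y\<^sup>2)) = q * x\<^sup>2 + (q/\<theta>) * y\<^sup>2 + (q * y\<^sup>2 + (q/\<theta>) * x\<^sup>2)"
          using \<theta> by (simp add: field_simps)
        moreover have "0 \<le> q * y\<^sup>2 + (q/\<theta>) * x\<^sup>2" using qp \<theta> by simp
        ultimately show ?thesis by linarith
      qed
      have Q2: "(L + m) * x\<^sup>2 + y\<^sup>2 \<le> (1 + m/\<theta>) * (L * x\<^sup>2 + y\<^sup>2)"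
      proof -
        have "m \<le> (m/\<theta>) * L"
        proof -
          have "m * 1 \<le> m * (L/\<theta>)" using L\<theta> \<theta> m by (intro mult_left_mono) auto
          then show ?thesis by simp
        qed
        then have "m * x\<^sup>2 \<le> (m/\<theta>) * L * x\<^sup>2" by (intro mult_right_mono) auto
        moreover have "(1 + m/\<theta>) * (L * x\<^sup>2 + y\<^sup>2) = L * x\<^sup>2 + (m/\<theta>) * L * x\<^sup>2 + y\<^sup>2 + (m/\<theta>) * y\<^sup>2"
          by (simp add: algebra_simps)
        moreover have "(L + m) * x\<^sup>2 + y\<^sup>2 = L * x\<^sup>2 + m * x\<^sup>2 + y\<^sup>2" by (simp add: algebra_simps)
        moreover have "0 \<le> (m/\<theta>) * y\<^sup>2" using m \<theta> by simp
        ultimately show ?thesis by linarith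
      qed
      have g1: "(cmod (w t))\<^sup>2 \<le> C * Eh * (x\<^sup>2 + y\<^sup>2)"
      proof -
        have "CB * Eh * (q * x\<^sup>2 + y\<^sup>2) \<le> CB * Eh * (q * ((1 + 1/\<theta>) * (x\<^sup>2 + y\<^sup>2)))"
          using Q1 CB Eh0 by (intro mult_left_mono) auto
        then have "q * (cmod (w t))\<^sup>2 \<le> CB * Eh * (q * ((1 + 1/\<theta>) * (x\<^sup>2 + y\<^sup>2)))"
          using bnd(1) by linarith
        also have "\<dots> = q * (CB * (1 + 1/\<theta>) * (Eh * (x\<^sup>2 + y\<^sup>2)))" by (simp add: mult_ac)
        finally have "(cmod (w t))\<^sup>2 \<le> CB * (1 + 1/\<theta>) * (Eh * (x\<^sup>2 + y\<^sup>2))"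
          using qp by (simp only: mult_le_cancel_left_pos)
        moreover have "0 \<le> Eh * (x\<^sup>2 + y\<^sup>2)" using Eh0 by simp
        ultimately have "(cmod (w t))\<^sup>2 \<le> C * (Eh * (x\<^sup>2 + y\<^sup>2))"
          using le_C CB1 by blast
        then show ?thesis by (simp add: mult.assoc)
      qed
      have g2: "(cmod (w1 t))\<^sup>2 \<le> C * Eh * ((L + m) * x\<^sup>2 + y\<^sup>2)"
      proof -
        have "(cmod (w1 t))\<^sup>2 \<le> CB * (Eh * ((L + m) * x\<^sup>2 + y\<^sup>2))"
          using bnd(2) unfolding q_def by (simp add: mult.assoc)
        moreover have "0 \<le> Eh * ((L + m) * x\<^sup>2 + y\<^sup>2)" using Eh0 L0 m by simp
        ultimately have "(cmod (w1 t))\<^sup>2 \<le> C * (Eh * ((L + m) * x\<^sup>2 + y\<^sup>2))"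
          using le_C CB0 by blast
        then show ?thesis by (simp add: mult.assoc)
      qed
      have g3: "L * (cmod (w t))\<^sup>2 \<le> C * Eh * (L * x\<^sup>2 + y\<^sup>2)"
      proof -
        have "L * (cmod (w t))\<^sup>2 \<le> q * (cmod (w t))\<^sup>2" unfolding q_def using m by (intro mult_right_mono) auto
        also have "\<dots> \<le> CB * Eh * ((L + m) * x\<^sup>2 + y\<^sup>2)" using bnd(1) unfolding q_def .
        also have "\<dots> \<le> CB * Eh * ((1 + m/\<theta>) * (L * x\<^sup>2 + y\<^sup>2))"
          using Q2 CB Eh0 by (intro mult_left_mono) auto
        also have "\<dots> = CB * (1 + m/\<theta>) * (Eh * (L * x\<^sup>2 + y\<^sup>2))" by (simp add: mult_ac)
        also have "\<dots> \<le> C * (Eh * (L * x\<^sup>2 + y\<^sup>2))"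
          using CB2 Eh0 L0 by (intro mult_right_mono) auto
        finally show ?thesis by (simp add: mult.assoc)
      qed
      show "(cmod (w t))\<^sup>2 \<le> C * exp ((- b + s) * t) * (x\<^sup>2 + y\<^sup>2)
         \<and> (cmod (w1 t))\<^sup>2 \<le> C * exp ((- b + s) * t) * ((L + m) * x\<^sup>2 + y\<^sup>2)
         \<and> L * (cmod (w t))\<^sup>2 \<le> C * exp ((- b + s) * t) * (L * x\<^sup>2 + y\<^sup>2)"
        using g1 g2 g3 unfolding Eh_def by blast
    qed
    show "let \<mu> = hermite_mu n k;
         L = \<bar>lam\<bar> powr \<alpha> * \<mu> powr \<alpha>;
         T = (1 / \<mu>) * ((1/2) * (b\<^sup>2 / 4 - m)) powr (1 / \<alpha>);
         N = (cmod a0)\<^sup>2 + (cmod a1)\<^sup>2;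
         Ep = exp ((- b + sqrt (b\<^sup>2 - 4 * m - 4 * L)) * t);
         Em = exp ((- b - sqrt (b\<^sup>2 - 4 * m - 4 * L)) * t);
         Eh = exp ((- b + sqrt ((1/2) * (b\<^sup>2 - 4 * m))) * t);
         P = (\<bar>lam\<bar> * \<mu>) powr (\<alpha> / 2)
     in (\<bar>lam\<bar> < T \<longrightarrow>
           (cmod (w t))\<^sup>2 \<le> C * Ep * N
         \<and> (cmod (w1 t))\<^sup>2 \<le> C * (Ep * (L + m)\<^sup>2 * N + Em * (cmod a1)\<^sup>2)
         \<and> (cmod (complex_of_real P * w t))\<^sup>2 \<le> C * Ep * (\<bar>lam\<bar> * \<mu>) powr \<alpha> * N)
      \<and> (\<bar>lam\<bar> > T \<longrightarrow>
           (cmod (w t))\<^sup>2 \<le> C * Eh * N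
         \<and> (cmod (w1 t))\<^sup>2 \<le> C * Eh * ((L + m) * (cmod a0)\<^sup>2 + (cmod a1)\<^sup>2)
         \<and> (cmod (complex_of_real P * w t))\<^sup>2 \<le> C * Eh * (L * (cmod a0)\<^sup>2 + (cmod a1)\<^sup>2))"
      unfolding Let_def \<mu>_def[symmetric] L_def[symmetric] Tth Pw Lprod Dq sh
      using A B unfolding q_def x_def y_def by simp
  qed
qed

end
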